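(* Let $u=\sum_{i,j=1}^4 q_{i,j}\,e_i\otimes e_j$ be a positive element of $\mathcal V\otimes_{\max}\mathcal V$. For $a,c\in\{0,2\}$ and $j,k\in\{1,2\}$ set $S_{a,c}(j,k)=\min_{b\in\{0,2\}}\sum_{i=1}^2\sqrt{q_{b+i,a+j}}\sqrt{q_{b+i,c+k}}$. Then for each $d\in\{0,2\}$, $\sum_{i,j=1}^2 q_{d+i,d+j}\le\min_{a,c\in\{0,2\}}\sum_{j,k=1}^2 S_{a,c}(j,k)$.
   Context: $e_1,\dots,e_4$ is the standard basis of $\ell^\infty_4$, and $\mathcal V=\{(a,b,c,d)\in\ell^\infty_4: a+b=c+d\}$ is an operator subsystem of $\ell^\infty_4$; elements of $\mathcal V\otimes\mathcal V\subseteq\ell^\infty_4\otimes\ell^\infty_4$ are written uniquely as $\sum q_{i,j}e_i\otimes e_j$ (positive elements have $q_{i,j}\ge0$). $\otimes_{\max}$ is the maximal operator system tensor product, whose cones are the Archimedeanization of $\{A^*(P\otimes Q)A: P\in M_k(\mathcal V)_+, Q\in M_m(\mathcal V)_+, A \text{ scalar}\}$. *)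

theory Defs
  imports Complex_Main
begin

(* Elements of l^infty_4 are functions nat => complex, only indices 1..4 matter. *)
definition inV :: "(nat \<Rightarrow> complex) \<Rightarrow> bool" where
  "inV v \<longleftrightarrow> v 1 + v 2 = v 3 + v 4"

definition psd :: "nat \<Rightarrow> (nat \<Rightarrow> nat \<Rightarrow> complex) \<Rightarrow> bool" where
  "psd k M \<longleftrightarrow> (\<forall>x :: nat \<Rightarrow> complex.
     Im (\<Sum>p<k. \<Sum>p'<k. cnj (x p) * M p p' * x p') = 0 \<and>
     Re (\<Sum>p<k. \<Sum>p'<k. cnj (x p) * M p p' * x p') \<ge> 0)"

(* P \<in> M_k(V)_+ : entries in V, positive in M_k(l^infty_4) = (M_k)^4 *)
definition MkV_pos :: "nat \<Rightarrow> (nat \<Rightarrow> nat \<Rightarrow> nat \<Rightarrow> complex) \<Rightarrow> bool" where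
  "MkV_pos k P \<longleftrightarrow> (\<forall>p<k. \<forall>p'<k. inV (P p p')) \<and>
                   (\<forall>i\<in>{1..4}. psd k (\<lambda>p p'. P p p' i))"

(* Elements of l^infty_4 \<otimes> l^infty_4 as arrays w i j (coefficient of e_i \<otimes> e_j) *)
definition in_VV :: "(nat \<Rightarrow> nat \<Rightarrow> complex) \<Rightarrow> bool" where
  "in_VV w \<longleftrightarrow> (\<forall>j\<in>{1..4}. inV (\<lambda>i. w i j)) \<and> (\<forall>i\<in>{1..4}. inV (w i))"

(* level-1 cone {A^*(P \<otimes> Q)A} before Archimedeanization; A is a km x 1 scalar matrix *)
definition max_D :: "(nat \<Rightarrow> nat \<Rightarrow> complex) set" where
  "max_D = {w. \<exists>k m P Q (\<alpha> :: nat \<Rightarrow> nat \<Rightarrow> complex). MkV_pos k P \<and> MkV_pos m Q \<and>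
     (\<forall>i\<in>{1..4}. \<forall>j\<in>{1..4}. w i j =
        (\<Sum>p<k. \<Sum>r<m. \<Sum>p'<k. \<Sum>r'<m.
            cnj (\<alpha> p r) * \<alpha> p' r' * P p p' i * Q r r' j))}"

(* positive elements of V \<otimes>_max V (Archimedeanization; unit is e \<otimes> e = all-ones array) *)
definition max_pos :: "(nat \<Rightarrow> nat \<Rightarrow> complex) \<Rightarrow> bool" where
  "max_pos w \<longleftrightarrow> in_VV w \<and> (\<forall>i\<in>{1..4}. \<forall>j\<in>{1..4}. cnj (w i j) = w i j) \<and>
     (\<forall>\<epsilon>>0. (\<lambda>i j. w i j + complex_of_real \<epsilon>) \<in> max_D)"

definition S :: "(nat \<Rightarrow> nat \<Rightarrow> real) \<Rightarrow> nat \<Rightarrow> nat \<Rightarrow> nat \<Rightarrow> nat \<Rightarrow> real" where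
  "S q a c j k = Min {(\<Sum>i\<in>{1,2}. sqrt (q (b+i) (a+j)) * sqrt (q (b+i) (c+k))) | b. b \<in> {0,2::nat}}"

end

theory Submission
  imports Defs "Jordan_Normal_Form.Determinant"
begin


lemma right_inverse_exists:
  fixes E :: "nat \<Rightarrow> nat \<Rightarrow> complex"
  assumes inj: "\<And>x. (\<forall>p<m. (\<Sum>l<m. E p l * x l) = 0) \<Longrightarrow> (\<forall>p<m. x p = 0)"
  shows "\<exists>Y. \<forall>r<m. \<forall>r'<m. (\<Sum>l<m. E r l * Y l r') = (if r = r' then 1 else 0)"
proof -
  define A where "A = mat m m (\<lambda>(i,j). E i j)"
  have A: "A \<in> carrier_mat m m" unfolding A_def by auto
  have "det A \<noteq> 0"
  proof
    assume "det A = 0"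
    then obtain v where v: "v \<in> carrier_vec m" "v \<noteq> 0\<^sub>v m" "A *\<^sub>v v = 0\<^sub>v m"
      using det_0_iff_vec_prod_zero[OF A] by auto
    define x where "x = (\<lambda>l. if l < m then v $ l else 0)"
    have "\<forall>p<m. (\<Sum>l<m. E p l * x l) = 0"
    proof (intro allI impI)
      fix p assume p: "p < m"
      have "(A *\<^sub>v v) $ p = 0" using v(3) p by simp
      moreover have "(A *\<^sub>v v) $ p = (\<Sum>l<m. E p l * x l)"
        using p v(1) unfolding A_def x_def
        by (auto simp: mult_mat_vec_def scalar_prod_def lessThan_atLeast0 intro!: sum.cong)
      ultimately show "(\<Sum>l<m. E p l * x l) = 0" by simp
    qed
    from inj[OF this] have "\<forall>p<m. x p = 0" .
    hence "v = 0\<^sub>v m" using v(1) unfolding x_def by (auto intro!: eq_vecI)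
    with v(2) show False by simp
  qed
  from det_non_zero_imp_unit[OF A this, of "()"]
  obtain B where B: "B \<in> carrier_mat m m" "A * B = 1\<^sub>m m"
    unfolding Units_def ring_mat_def by auto
  show ?thesis
  proof (intro exI allI impI)
    fix r r' assume r: "r < m" and r': "r' < m"
    have "(A * B) $$ (r, r') = (\<Sum>l<m. E r l * B $$ (l, r'))"
      using r r' B(1) unfolding A_def
      by (auto simp: scalar_prod_def lessThan_atLeast0 intro!: sum.cong)
    also have "(A * B) $$ (r, r') = (if r = r' then 1 else 0)" using B(2) r r' by simp
    finally show "(\<Sum>l<m. E r l * B $$ (l, r')) = (if r = r' then 1 else 0)" by simp
  qed
qed


definition ip :: "nat \<Rightarrow> (nat\<Rightarrow>complex) \<Rightarrow> (nat\<Rightarrow>complex) \<Rightarrow> complex" where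
  "ip n x y = (\<Sum>p<n. cnj (x p) * y p)"
definition mv :: "nat \<Rightarrow> (nat\<Rightarrow>nat\<Rightarrow>complex) \<Rightarrow> (nat\<Rightarrow>complex) \<Rightarrow> nat \<Rightarrow> complex" where
  "mv n A x = (\<lambda>p. \<Sum>l<n. A p l * x l)"
definition mm :: "nat \<Rightarrow> (nat\<Rightarrow>nat\<Rightarrow>complex) \<Rightarrow> (nat\<Rightarrow>nat\<Rightarrow>complex) \<Rightarrow> nat\<Rightarrow>nat\<Rightarrow>complex" where
  "mm n A B = (\<lambda>i j. \<Sum>l<n. A i l * B l j)"
definition herm :: "nat \<Rightarrow> (nat\<Rightarrow>nat\<Rightarrow>complex) \<Rightarrow> bool" where
  "herm n A \<longleftrightarrow> (\<forall>p<n. \<forall>q<n. A q p = cnj (A p q))"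
definition qf :: "nat \<Rightarrow> (nat\<Rightarrow>nat\<Rightarrow>complex) \<Rightarrow> (nat\<Rightarrow>complex) \<Rightarrow> complex" where
  "qf n A x = ip n x (mv n A x)"
definition ev :: "nat \<Rightarrow> nat \<Rightarrow> complex" where
  "ev a = (\<lambda>p. if p = a then 1 else 0)"

lemma qf_sum: "(\<Sum>p<n. \<Sum>p'<n. cnj (x p) * A p p' * x p') = qf n A x"
  unfolding qf_def ip_def mv_def by (simp add: sum_distrib_left mult.assoc)

lemma psd_iff: "psd n A \<longleftrightarrow> (\<forall>x. Im (qf n A x) = 0 \<and> Re (qf n A x) \<ge> 0)"
  unfolding psd_def qf_sum ..

lemma ip_add_left: "ip n (\<lambda>p. x p + y p) z = ip n x z + ip n y z"
  unfolding ip_def by (simp add: algebra_simps sum.distrib)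
lemma ip_add_right: "ip n z (\<lambda>p. x p + y p) = ip n z x + ip n z y"
  unfolding ip_def by (simp add: algebra_simps sum.distrib)
lemma ip_diff_left: "ip n (\<lambda>p. x p - y p) z = ip n x z - ip n y z"
  unfolding ip_def by (simp add: algebra_simps sum_subtractf)
lemma ip_diff_right: "ip n z (\<lambda>p. x p - y p) = ip n z x - ip n z y"
  unfolding ip_def by (simp add: algebra_simps sum_subtractf)
lemma ip_scale_left: "ip n (\<lambda>p. c * x p) z = cnj c * ip n x z"
  unfolding ip_def by (simp add: algebra_simps sum_distrib_left)
lemma ip_scale_right: "ip n z (\<lambda>p. c * x p) = c * ip n z x"
  unfolding ip_def by (simp add: algebra_simps sum_distrib_left)
lemma ip_cnj: "ip n y x = cnj (ip n x y)"
  unfolding ip_def by (simp add: mult.commute)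
lemma ip_self: "ip n x x = of_real (\<Sum>p<n. (cmod (x p))^2)"
  unfolding ip_def of_real_sum
  by (rule sum.cong[OF refl]) (subst complex_norm_square, rule mult.commute)
lemma ip_cong: "(\<And>p. p < n \<Longrightarrow> x p = x' p) \<Longrightarrow> (\<And>p. p < n \<Longrightarrow> y p = y' p) \<Longrightarrow> ip n x y = ip n x' y'"
  unfolding ip_def by simp

lemma mv_add_vec: "mv n A (\<lambda>p. x p + y p) = (\<lambda>p. mv n A x p + mv n A y p)"
  unfolding mv_def by (simp add: algebra_simps sum.distrib)
lemma mv_diff_vec: "mv n A (\<lambda>p. x p - y p) = (\<lambda>p. mv n A x p - mv n A y p)"
  unfolding mv_def by (simp add: algebra_simps sum_subtractf)
lemma mv_scale_vec: "mv n A (\<lambda>p. c * x p) = (\<lambda>p. c * mv n A x p)"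
  unfolding mv_def by (simp add: algebra_simps sum_distrib_left)
lemma mv_add_mat: "mv n (\<lambda>i j. A i j + B i j) x = (\<lambda>p. mv n A x p + mv n B x p)"
  unfolding mv_def by (simp add: algebra_simps sum.distrib)
lemma mv_diff_mat: "mv n (\<lambda>i j. A i j - B i j) x = (\<lambda>p. mv n A x p - mv n B x p)"
  unfolding mv_def by (simp add: algebra_simps sum_subtractf)
lemma mv_scale_mat: "mv n (\<lambda>i j. c * A i j) x = (\<lambda>p. c * mv n A x p)"
  unfolding mv_def by (simp add: algebra_simps sum_distrib_left)
lemma mv_cong_vec: "(\<And>p. p < n \<Longrightarrow> x p = x' p) \<Longrightarrow> mv n A x = mv n A x'"
  unfolding mv_def by simp
lemma mv_mm: "mv n (mm n A B) x = mv n A (mv n B x)"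
proof (rule ext)
  fix p
  have "mv n (mm n A B) x p = (\<Sum>l<n. \<Sum>l'<n. A p l' * B l' l * x l)"
    unfolding mv_def mm_def by (simp add: sum_distrib_right)
  also have "\<dots> = (\<Sum>l'<n. \<Sum>l<n. A p l' * B l' l * x l)" by (rule sum.swap)
  also have "\<dots> = mv n A (mv n B x) p"
    unfolding mv_def by (simp add: sum_distrib_left mult.assoc)
  finally show "mv n (mm n A B) x p = mv n A (mv n B x) p" .
qed

lemma qf_add_mat: "qf n (\<lambda>i j. A i j + B i j) x = qf n A x + qf n B x"
  unfolding qf_def mv_add_mat ip_add_right ..
lemma qf_diff_mat: "qf n (\<lambda>i j. A i j - B i j) x = qf n A x - qf n B x"
  unfolding qf_def mv_diff_mat ip_diff_right ..

lemma mv_ev: "a < n \<Longrightarrow> mv n A (ev a) = (\<lambda>p. A p a)"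
  unfolding mv_def ev_def by (auto simp: if_distrib cong: if_cong)
lemma ip_ev: "a < n \<Longrightarrow> ip n (ev a) y = y a"
proof -
  assume a: "a < n"
  have "ip n (ev a) y = (\<Sum>p<n. if p = a then y p else 0)"
    unfolding ip_def ev_def by (rule sum.cong) auto
  thus ?thesis using a by simp
qed

lemma qf_two: assumes "a < n" "b < n"
  shows "qf n A (\<lambda>p. ev a p + c * ev b p) = A a a + c * A a b + cnj c * A b a + cnj c * c * A b b"
  unfolding qf_def mv_add_vec mv_scale_vec ip_add_left ip_add_right ip_scale_left ip_scale_right
  using assms by (simp add: mv_ev ip_ev algebra_simps)

lemma qf_one: assumes "a < n" shows "qf n A (ev a) = A a a"
  unfolding qf_def using assms by (simp add: mv_ev ip_ev)

lemma herm_ip: assumes "herm n A" shows "ip n (mv n A x) y = ip n x (mv n A y)"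
proof -
  have "ip n (mv n A x) y = (\<Sum>p<n. (\<Sum>l<n. cnj (A p l) * cnj (x l)) * y p)"
    unfolding ip_def mv_def by simp
  also have "\<dots> = (\<Sum>p<n. \<Sum>l<n. cnj (A p l) * cnj (x l) * y p)"
    by (simp only: sum_distrib_right)
  also have "\<dots> = (\<Sum>l<n. \<Sum>p<n. cnj (A p l) * cnj (x l) * y p)"
    by (rule sum.swap)
  also have "\<dots> = (\<Sum>l<n. \<Sum>p<n. cnj (x l) * (A l p * y p))"
  proof (rule sum.cong[OF refl], rule sum.cong[OF refl])
    fix l p assume "l \<in> {..<n}" "p \<in> {..<n}"
    hence "A l p = cnj (A p l)" using assms unfolding herm_def by blast
    hence "cnj (A p l) = A l p" by (metis complex_cnj_cnj)
    thus "cnj (A p l) * cnj (x l) * y p = cnj (x l) * (A l p * y p)" by simp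
  qed
  also have "\<dots> = ip n x (mv n A y)"
    unfolding ip_def mv_def by (simp only: sum_distrib_left)
  finally show ?thesis .
qed



lemma psd_qf: "psd n A \<Longrightarrow> Im (qf n A x) = 0 \<and> Re (qf n A x) \<ge> 0"
  unfolding psd_iff by blast

lemma psd_diag: assumes "psd n A" "a < n" shows "Im (A a a) = 0" "Re (A a a) \<ge> 0"
  using psd_qf[OF assms(1), of "ev a"] qf_one[OF assms(2), of A] by auto

lemma psd_herm: assumes "psd n A" shows "herm n A"
  unfolding herm_def
proof (intro allI impI)
  fix p q assume p: "p < n" and q: "q < n"
  show "A q p = cnj (A p q)"
  proof (cases "p = q")
    case True thus ?thesis using psd_diag[OF assms p] by (simp add: complex_eq_iff)
  next
    case False
    have h1: "Im (A p p + 1 * A p q + cnj 1 * A q p + cnj 1 * 1 * A q q) = 0"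
      using psd_qf[OF assms, of "\<lambda>r. ev p r + 1 * ev q r"] qf_two[OF p q, of A 1] by simp
    have h2: "Im (A p p + \<i> * A p q + cnj \<i> * A q p + cnj \<i> * \<i> * A q q) = 0"
      using psd_qf[OF assms, of "\<lambda>r. ev p r + \<i> * ev q r"] qf_two[OF p q, of A \<i>] by simp
    have "Im (A p p) = 0" "Im (A q q) = 0" using psd_diag[OF assms] p q by auto
    with h1 h2 show ?thesis by (simp add: complex_eq_iff)
  qed
qed

lemma herm_cnj: "herm n A \<Longrightarrow> p < n \<Longrightarrow> q < n \<Longrightarrow> A q p = cnj (A p q)"
  unfolding herm_def by blast

lemma psd_diag_zero: assumes "psd n A" "a < n" "b < n" "A a a = 0" shows "A a b = 0"
proof (rule ccontr)
  assume nz: "A a b \<noteq> 0"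
  define z where "z = A a b"
  define N where "N = (cmod z)^2"
  have Npos: "N > 0" using nz unfolding N_def z_def by simp
  have zz: "cnj z * z = of_real N" "z * cnj z = of_real N"
    unfolding N_def complex_norm_square by (simp_all add: mult.commute)
  have hba: "A b a = cnj z" using herm_cnj[OF psd_herm[OF assms(1)] assms(2,3)] z_def by simp
  define t where "t = (Re (A b b) + 1) / (2 * N)"
  define c where "c = - (of_real t * z)"
  have "Re (qf n A (\<lambda>r. ev b r + c * ev a r)) \<ge> 0" using psd_qf[OF assms(1)] by blast
  also have "qf n A (\<lambda>r. ev b r + c * ev a r) = A b b + c * A b a + cnj c * A a b + cnj c * c * A a a"
    by (rule qf_two[OF assms(3,2)])
  also have "\<dots> = A b b - of_real (2 * t * N)"
    using zz assms(4) unfolding c_def hba z_def[symmetric] by (simp add: algebra_simps)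
  finally have "Re (A b b) - 2 * t * N \<ge> 0" by simp
  moreover have "2 * t * N = Re (A b b) + 1" unfolding t_def using Npos by simp
  ultimately show False by simp
qed

lemma qf_shift: assumes "herm n A" "a < n"
  shows "qf n A (\<lambda>r. x r - \<mu> * ev a r) = qf n A x - \<mu> * cnj (mv n A x a) - cnj \<mu> * mv n A x a + cnj \<mu> * \<mu> * A a a"
proof -
  have e1: "ip n x (mv n A (ev a)) = cnj (mv n A x a)"
  proof -
    have "ip n x (mv n A (ev a)) = ip n (mv n A x) (ev a)" using herm_ip[OF assms(1)] by simp
    also have "\<dots> = cnj (ip n (ev a) (mv n A x))" by (rule ip_cnj)
    finally show ?thesis using ip_ev[OF assms(2)] by simp
  qed
  show ?thesis
    unfolding qf_def mv_diff_vec mv_scale_vec ip_diff_left ip_diff_right ip_scale_left ip_scale_right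
    using e1 assms(2) by (simp add: ip_ev mv_ev algebra_simps)
qed




lemma schur_psd: assumes A: "psd n A" and a: "a < n" and d: "A a a \<noteq> 0"
  shows "psd n (\<lambda>\<rho> \<rho>'. A \<rho> \<rho>' - A \<rho> a * A a \<rho>' / A a a)"
  unfolding psd_iff
proof
  fix x
  define g where "g = mv n A x a"
  define dd where "dd = A a a"
  have cd: "cnj dd = dd" using psd_diag[OF A a] unfolding dd_def by (simp add: complex_eq_iff)
  have mvB: "mv n (\<lambda>\<rho> \<rho>'. A \<rho> a * A a \<rho>' / A a a) x = (\<lambda>\<rho>. (g / dd) * A \<rho> a)"
    unfolding mv_def g_def dd_def by (rule ext) (simp add: sum_distrib_left sum_divide_distrib mult_ac)
  have e1: "ip n x (\<lambda>\<rho>. A \<rho> a) = cnj g"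
  proof -
    have "ip n x (\<lambda>\<rho>. A \<rho> a) = ip n x (mv n A (ev a))" using mv_ev[OF a] by simp
    also have "\<dots> = ip n (mv n A x) (ev a)" using herm_ip[OF psd_herm[OF A]] by simp
    also have "\<dots> = cnj (ip n (ev a) (mv n A x))" by (rule ip_cnj)
    finally show ?thesis using ip_ev[OF a] g_def by simp
  qed
  have "qf n (\<lambda>\<rho> \<rho>'. A \<rho> \<rho>' - A \<rho> a * A a \<rho>' / A a a) x = qf n A x - (g / dd) * cnj g"
    unfolding qf_diff_mat unfolding qf_def mvB ip_scale_right e1 ..
  also have "\<dots> = qf n A (\<lambda>r. x r - (g/dd) * ev a r)"
    unfolding qf_shift[OF psd_herm[OF A] a] g_def[symmetric] dd_def[symmetric]
    using d unfolding dd_def[symmetric] by (simp add: cd field_simps)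
  finally show "Im (qf n (\<lambda>\<rho> \<rho>'. A \<rho> \<rho>' - A \<rho> a * A a \<rho>' / A a a) x) = 0 \<and>
      0 \<le> Re (qf n (\<lambda>\<rho> \<rho>'. A \<rho> \<rho>' - A \<rho> a * A a \<rho>' / A a a) x)"
    using psd_qf[OF A] by simp
qed

lemma factor_aux:
  "psd n A \<Longrightarrow> j \<le> n \<Longrightarrow> (\<forall>\<rho><n. \<forall>\<rho>'<n. (\<rho> < j \<or> \<rho>' < j) \<longrightarrow> A \<rho> \<rho>' = 0) \<Longrightarrow>
   \<exists>z. \<forall>\<rho><n. \<forall>\<rho>'<n. A \<rho> \<rho>' = (\<Sum>t\<in>{j..<n}. z t \<rho> * cnj (z t \<rho>'))"
proof (induction "n - j" arbitrary: j A)
  case 0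
  hence "j = n" by simp
  thus ?case using 0 by auto
next
  case (Suc dd)
  have jn: "j < n" using Suc by simp
  have IH: "\<And>B. psd n B \<Longrightarrow> (\<forall>\<rho><n. \<forall>\<rho>'<n. (\<rho> < Suc j \<or> \<rho>' < Suc j) \<longrightarrow> B \<rho> \<rho>' = 0) \<Longrightarrow>
      \<exists>z. \<forall>\<rho><n. \<forall>\<rho>'<n. B \<rho> \<rho>' = (\<Sum>t\<in>{Suc j..<n}. z t \<rho> * cnj (z t \<rho>'))"
    using Suc.hyps(1)[of "Suc j"] Suc.hyps(2) jn by auto
  have split: "\<And>f. (\<Sum>t\<in>{j..<n}. f t) = f j + (\<Sum>t\<in>{Suc j..<n}. f t)"
    using jn by (simp add: sum.atLeast_Suc_lessThan)
  have H: "herm n A" using psd_herm[OF Suc.prems(1)] .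
  show ?case
  proof (cases "A j j = 0")
    case True
    have row: "\<And>\<rho>. \<rho> < n \<Longrightarrow> A j \<rho> = 0" using psd_diag_zero[OF Suc.prems(1) jn _ True] by blast
    have col: "\<And>\<rho>. \<rho> < n \<Longrightarrow> A \<rho> j = 0"
    proof -
      fix \<rho> assume r: "\<rho> < n"
      have "A \<rho> j = cnj (A j \<rho>)" by (rule herm_cnj[OF H jn r])
      thus "A \<rho> j = 0" using row[OF r] by simp
    qed
    have "\<forall>\<rho><n. \<forall>\<rho>'<n. (\<rho> < Suc j \<or> \<rho>' < Suc j) \<longrightarrow> A \<rho> \<rho>' = 0"
    proof (intro allI impI)
      fix \<rho> \<rho>' assume r: "\<rho> < n" "\<rho>' < n" "\<rho> < Suc j \<or> \<rho>' < Suc j"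
      show "A \<rho> \<rho>' = 0"
      proof (cases "\<rho> < j \<or> \<rho>' < j")
        case True thus ?thesis using Suc.prems(3) r(1,2) by blast
      next
        case False
        hence "\<rho> = j \<or> \<rho>' = j" using r(3) by auto
        thus ?thesis using row col r(1,2) by auto
      qed
    qed
    then obtain z where z: "\<forall>\<rho><n. \<forall>\<rho>'<n. A \<rho> \<rho>' = (\<Sum>t\<in>{Suc j..<n}. z t \<rho> * cnj (z t \<rho>'))"
      using IH[OF Suc.prems(1)] by blast
    show ?thesis
    proof (intro exI allI impI)
      fix \<rho> \<rho>' assume r: "\<rho> < n" "\<rho>' < n"
      show "A \<rho> \<rho>' = (\<Sum>t\<in>{j..<n}. (z(j := (\<lambda>_. 0))) t \<rho> * cnj ((z(j := (\<lambda>_. 0))) t \<rho>'))"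
      proof -
        have "(\<Sum>t\<in>{Suc j..<n}. (z(j := (\<lambda>_. 0))) t \<rho> * cnj ((z(j := (\<lambda>_. 0))) t \<rho>'))
            = (\<Sum>t\<in>{Suc j..<n}. z t \<rho> * cnj (z t \<rho>'))" by (rule sum.cong) auto
        thus ?thesis unfolding split using z r by simp
      qed
    qed
  next
    case False
    define B where "B = (\<lambda>\<rho> \<rho>'. A \<rho> \<rho>' - A \<rho> j * A j \<rho>' / A j j)"
    have Bpsd: "psd n B" unfolding B_def by (rule schur_psd[OF Suc.prems(1) jn False])
    have "\<forall>\<rho><n. \<forall>\<rho>'<n. (\<rho> < Suc j \<or> \<rho>' < Suc j) \<longrightarrow> B \<rho> \<rho>' = 0"
    proof (intro allI impI)
      fix \<rho> \<rho>' assume r: "\<rho> < n" "\<rho>' < n" "\<rho> < Suc j \<or> \<rho>' < Suc j"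
      show "B \<rho> \<rho>' = 0"
      proof (cases "\<rho> < j \<or> \<rho>' < j")
        case True
        hence "A \<rho> \<rho>' = 0" "A \<rho> j = 0 \<or> A j \<rho>' = 0" using Suc.prems(3) r(1,2) jn by blast+
        thus ?thesis unfolding B_def by auto
      next
        case F2: False
        hence "\<rho> = j \<or> \<rho>' = j" using r(3) by auto
        thus ?thesis unfolding B_def using False by auto
      qed
    qed
    then obtain z where z: "\<forall>\<rho><n. \<forall>\<rho>'<n. B \<rho> \<rho>' = (\<Sum>t\<in>{Suc j..<n}. z t \<rho> * cnj (z t \<rho>'))"
      using IH[OF Bpsd] by blast
    define s where "s = sqrt (Re (A j j))"
    have djr: "A j j = of_real (Re (A j j))" using psd_diag[OF Suc.prems(1) jn] by (simp add: complex_eq_iff)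
    have "s * s = Re (A j j)" unfolding s_def using psd_diag(2)[OF Suc.prems(1) jn] by simp
    hence "of_real s * of_real s = (of_real (Re (A j j)) :: complex)" by (metis of_real_mult)
    hence s2: "of_real s * of_real s = A j j" using djr by simp
    define z' where "z' = z(j := (\<lambda>\<rho>. A \<rho> j / of_real s))"
    show ?thesis
    proof (intro exI allI impI)
      fix \<rho> \<rho>' assume r: "\<rho> < n" "\<rho>' < n"
      have h: "A j \<rho>' = cnj (A \<rho>' j)" by (rule herm_cnj[OF H r(2) jn])
      have "z' j \<rho> * cnj (z' j \<rho>') = (A \<rho> j / of_real s) * (cnj (A \<rho>' j) / of_real s)"
        unfolding z'_def by simp
      also have "\<dots> = A \<rho> j * A j \<rho>' / (of_real s * of_real s)" unfolding h by simp
      also have "\<dots> = A \<rho> j * A j \<rho>' / A j j" unfolding s2 ..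
      finally have e1: "z' j \<rho> * cnj (z' j \<rho>') = A \<rho> j * A j \<rho>' / A j j" .
      have e2: "(\<Sum>t\<in>{Suc j..<n}. z' t \<rho> * cnj (z' t \<rho>')) = (\<Sum>t\<in>{Suc j..<n}. z t \<rho> * cnj (z t \<rho>'))"
        unfolding z'_def by (rule sum.cong) auto
      have "B \<rho> \<rho>' = (\<Sum>t\<in>{Suc j..<n}. z t \<rho> * cnj (z t \<rho>'))" using z r by blast
      thus "A \<rho> \<rho>' = (\<Sum>t\<in>{j..<n}. z' t \<rho> * cnj (z' t \<rho>'))"
        unfolding split e1 e2 B_def by (metis diff_add_cancel add.commute)
    qed
  qed
qed

lemma factor: "psd n A \<Longrightarrow> \<exists>z. \<forall>\<rho><n. \<forall>\<rho>'<n. A \<rho> \<rho>' = (\<Sum>t<n. z t \<rho> * cnj (z t \<rho>'))"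
  using factor_aux[of n A 0] by (simp add: atLeast0LessThan)




definition Phi :: "nat \<Rightarrow> nat \<Rightarrow> (nat\<Rightarrow>nat\<Rightarrow>complex) \<Rightarrow> (nat\<Rightarrow>nat\<Rightarrow>complex) \<Rightarrow> (nat\<Rightarrow>nat\<Rightarrow>complex) \<Rightarrow> complex" where
  "Phi k m \<alpha> P Z = (\<Sum>p<k. \<Sum>r<m. \<Sum>p'<k. \<Sum>r'<m. cnj (\<alpha> p r) * \<alpha> p' r' * P p p' * Z r r')"

lemma Phi_ip: "Phi k m \<alpha> P Z = (\<Sum>p<k. \<Sum>p'<k. P p p' * ip m (\<lambda>r. \<alpha> p r) (mv m Z (\<lambda>r. \<alpha> p' r)))"
proof -
  have "Phi k m \<alpha> P Z = (\<Sum>p<k. \<Sum>p'<k. \<Sum>r<m. \<Sum>r'<m. cnj (\<alpha> p r) * \<alpha> p' r' * P p p' * Z r r')"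
    unfolding Phi_def by (rule sum.cong[OF refl], rule sum.swap)
  also have "\<dots> = (\<Sum>p<k. \<Sum>p'<k. P p p' * ip m (\<lambda>r. \<alpha> p r) (mv m Z (\<lambda>r. \<alpha> p' r)))"
    unfolding ip_def mv_def by (simp add: sum_distrib_left mult_ac)
  finally show ?thesis .
qed

lemma ip_factor:
  assumes Z: "\<forall>\<rho><m. \<forall>\<rho>'<m. Z \<rho> \<rho>' = (\<Sum>t<m. z t \<rho> * cnj (z t \<rho>'))"
  shows "ip m u (mv m Z v) = (\<Sum>t<m. cnj (ip m (z t) u) * ip m (z t) v)"
proof -
  have "ip m u (mv m Z v) = (\<Sum>r<m. \<Sum>r'<m. \<Sum>t<m. cnj (u r) * z t r * (cnj (z t r') * v r'))"
    unfolding ip_def mv_def using Z by (simp add: sum_distrib_left sum_distrib_right mult_ac)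
  also have "\<dots> = (\<Sum>r<m. \<Sum>t<m. \<Sum>r'<m. cnj (u r) * z t r * (cnj (z t r') * v r'))"
    by (rule sum.cong[OF refl], rule sum.swap)
  also have "\<dots> = (\<Sum>t<m. \<Sum>r<m. \<Sum>r'<m. cnj (u r) * z t r * (cnj (z t r') * v r'))"
    by (rule sum.swap)
  also have "\<dots> = (\<Sum>t<m. cnj (ip m (z t) u) * ip m (z t) v)"
    unfolding ip_def by (simp add: sum_distrib_left sum_distrib_right mult_ac)
  finally show ?thesis .
qed

lemma Phi_pos: assumes P: "psd k P" and Z: "psd m Z"
  shows "Im (Phi k m \<alpha> P Z) = 0 \<and> Re (Phi k m \<alpha> P Z) \<ge> 0"
proof -
  obtain z where z: "\<forall>\<rho><m. \<forall>\<rho>'<m. Z \<rho> \<rho>' = (\<Sum>t<m. z t \<rho> * cnj (z t \<rho>'))"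
    using factor[OF Z] by blast
  define y where "y = (\<lambda>t p. ip m (z t) (\<lambda>r. \<alpha> p r))"
  have "Phi k m \<alpha> P Z = (\<Sum>p<k. \<Sum>p'<k. \<Sum>t<m. cnj (y t p) * P p p' * y t p')"
    unfolding Phi_ip ip_factor[OF z] y_def by (simp add: sum_distrib_left mult_ac)
  also have "\<dots> = (\<Sum>p<k. \<Sum>t<m. \<Sum>p'<k. cnj (y t p) * P p p' * y t p')"
    by (rule sum.cong[OF refl], rule sum.swap)
  also have "\<dots> = (\<Sum>t<m. \<Sum>p<k. \<Sum>p'<k. cnj (y t p) * P p p' * y t p')"
    by (rule sum.swap)
  also have "\<dots> = (\<Sum>t<m. qf k P (y t))" unfolding qf_sum ..
  finally have eq: "Phi k m \<alpha> P Z = (\<Sum>t<m. qf k P (y t))" .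
  have "Im (\<Sum>t<m. qf k P (y t)) = 0" using psd_qf[OF P] by (simp add: Im_sum)
  moreover have "Re (\<Sum>t<m. qf k P (y t)) \<ge> 0" using psd_qf[OF P] by (simp add: Re_sum sum_nonneg)
  ultimately show ?thesis unfolding eq by simp
qed




lemma Phi_cong_Z: "(\<And>r r'. r < m \<Longrightarrow> r' < m \<Longrightarrow> Z r r' = Z' r r') \<Longrightarrow> Phi k m \<alpha> P Z = Phi k m \<alpha> P Z'"
  unfolding Phi_def by (intro sum.cong refl) auto
lemma Phi_cong_P: "(\<And>p p'. p < k \<Longrightarrow> p' < k \<Longrightarrow> P p p' = P' p p') \<Longrightarrow> Phi k m \<alpha> P Z = Phi k m \<alpha> P' Z"
  unfolding Phi_def by (intro sum.cong refl) auto
lemma Phi_add_Z: "Phi k m \<alpha> P (\<lambda>r r'. Z1 r r' + Z2 r r') = Phi k m \<alpha> P Z1 + Phi k m \<alpha> P Z2"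
  unfolding Phi_def by (simp add: distrib_left sum.distrib)
lemma Phi_diff_Z: "Phi k m \<alpha> P (\<lambda>r r'. Z1 r r' - Z2 r r') = Phi k m \<alpha> P Z1 - Phi k m \<alpha> P Z2"
  unfolding Phi_def by (simp add: right_diff_distrib sum_subtractf)
lemma Phi_scale_Z: "Phi k m \<alpha> P (\<lambda>r r'. c * Z r r') = c * Phi k m \<alpha> P Z"
  unfolding Phi_def by (simp add: sum_distrib_left mult_ac)
lemma Phi_add_P: "Phi k m \<alpha> (\<lambda>p p'. P1 p p' + P2 p p') Z = Phi k m \<alpha> P1 Z + Phi k m \<alpha> P2 Z"
  unfolding Phi_def by (simp add: distrib_left distrib_right sum.distrib)

lemma qf_scale_mat: "qf n (\<lambda>i j. c * A i j) x = c * qf n A x"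
  unfolding qf_def mv_scale_mat ip_scale_right ..

lemma qf_mmm: assumes "herm n A"
  shows "qf n (mm n (mm n A Y) B) x = ip n (mv n A x) (mv n Y (mv n B x))"
  unfolding qf_def mv_mm herm_ip[OF assms] ..

lemma psd_add: "psd n A \<Longrightarrow> psd n B \<Longrightarrow> psd n (\<lambda>i j. A i j + B i j)"
  unfolding psd_iff qf_add_mat by simp

lemma qf_cong_mat: assumes "\<And>i j. i < n \<Longrightarrow> j < n \<Longrightarrow> E i j = A i j" shows "qf n E x = qf n A x"
  unfolding qf_def mv_def by (rule ip_cong) (auto simp: assms intro!: sum.cong)

lemma psd_cong: assumes "psd n A" "\<And>i j. i < n \<Longrightarrow> j < n \<Longrightarrow> E i j = A i j" shows "psd n E"
proof -
  have "\<forall>x. qf n E x = qf n A x"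
  proof
    fix x show "qf n E x = qf n A x" by (rule qf_cong_mat, rule assms(2)) auto
  qed
  thus ?thesis using assms(1) unfolding psd_iff by simp
qed

lemma inv_apply: assumes "\<forall>i<m. \<forall>j<m. mm m E Y i j = (if i = j then 1 else 0)" "p < m"
  shows "mv m E (mv m Y v) p = v p"
proof -
  have "mv m E (mv m Y v) p = mv m (mm m E Y) v p" by (simp only: mv_mm)
  also have "\<dots> = (\<Sum>l<m. mm m E Y p l * v l)" by (simp add: mv_def)
  also have "\<dots> = (\<Sum>l<m. if l = p then v l else 0)"
  proof (rule sum.cong[OF refl])
    fix l assume "l \<in> {..<m}"
    hence "mm m E Y p l = (if p = l then 1 else 0)" using assms by blast
    thus "mm m E Y p l * v l = (if l = p then v l else 0)" by auto
  qed
  also have "\<dots> = v p" using assms(2) by simp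
  finally show ?thesis .
qed

lemma psd_inv: assumes E: "psd m E" and inv: "\<forall>i<m. \<forall>j<m. mm m E Y i j = (if i = j then 1 else 0)"
  shows "psd m Y"
  unfolding psd_iff
proof
  fix v
  define w where "w = mv m Y v"
  have "qf m Y v = ip m (mv m E w) w"
    unfolding qf_def w_def by (rule ip_cong) (auto simp: inv_apply[OF inv])
  also have "\<dots> = qf m E w" unfolding qf_def by (rule herm_ip[OF psd_herm[OF E]])
  finally show "Im (qf m Y v) = 0 \<and> 0 \<le> Re (qf m Y v)" using psd_qf[OF E] by simp
qed

lemma psd_sandwich: assumes "herm n A" "psd n Y" shows "psd n (mm n (mm n A Y) A)"
  unfolding psd_iff qf_mmm[OF assms(1)] using psd_qf[OF assms(2)] unfolding qf_def by simp

lemma psd_Zl: assumes HA: "herm n A" and HB: "herm n B" and Y: "psd n Y"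
  shows "psd n (\<lambda>i j. cnj l * l * mm n (mm n A Y) A i j + cnj l * mm n (mm n A Y) B i j
                     + l * mm n (mm n B Y) A i j + mm n (mm n B Y) B i j)"
  unfolding psd_iff
proof
  fix x
  define u where "u = mv n A x"
  define v where "v = mv n B x"
  have "qf n (\<lambda>i j. cnj l * l * mm n (mm n A Y) A i j + cnj l * mm n (mm n A Y) B i j
                     + l * mm n (mm n B Y) A i j + mm n (mm n B Y) B i j) x
      = qf n Y (\<lambda>p. l * u p + v p)"
    unfolding qf_add_mat qf_scale_mat qf_mmm[OF HA] qf_mmm[OF HB] u_def[symmetric] v_def[symmetric]
    unfolding qf_def mv_add_vec mv_scale_vec ip_add_left ip_add_right ip_scale_left ip_scale_right
    by (simp add: algebra_simps)
  thus "Im (qf n (\<lambda>i j. cnj l * l * mm n (mm n A Y) A i j + cnj l * mm n (mm n A Y) B i j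
                     + l * mm n (mm n B Y) A i j + mm n (mm n B Y) B i j) x) = 0 \<and>
        0 \<le> Re (qf n (\<lambda>i j. cnj l * l * mm n (mm n A Y) A i j + cnj l * mm n (mm n A Y) B i j
                     + l * mm n (mm n B Y) A i j + mm n (mm n B Y) B i j) x)"
    using psd_qf[OF Y] by simp
qed

lemma lemmaC: assumes Q: "psd m Q" and R: "psd m R"
  and EQR: "\<And>i j. i < m \<Longrightarrow> j < m \<Longrightarrow> E i j = Q i j + R i j"
  and inv: "\<forall>i<m. \<forall>j<m. mm m E Y i j = (if i = j then 1 else 0)"
  shows "psd m (\<lambda>i j. Q i j - mm m (mm m Q Y) Q i j)"
  unfolding psd_iff
proof
  fix x
  have HQ: "herm m Q" using psd_herm[OF Q] .
  have Epsd: "psd m E" by (rule psd_cong[OF psd_add[OF Q R] EQR])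
  have HE: "herm m E" using psd_herm[OF Epsd] .
  define u where "u = mv m Q x"
  define y where "y = mv m Y u"
  define s where "s = qf m E y"
  have s1: "qf m (mm m (mm m Q Y) Q) x = s"
  proof -
    have "qf m (mm m (mm m Q Y) Q) x = ip m u y" unfolding qf_mmm[OF HQ] u_def y_def ..
    also have "\<dots> = ip m (mv m E y) y" unfolding y_def by (rule ip_cong) (auto simp: inv_apply[OF inv])
    also have "\<dots> = s" unfolding s_def qf_def by (rule herm_ip[OF HE])
    finally show ?thesis .
  qed
  have s2: "ip m x (mv m Q y) = s"
  proof -
    have "ip m x (mv m Q y) = ip m u y" unfolding u_def by (rule herm_ip[OF HQ, symmetric])
    also have "\<dots> = ip m (mv m E y) y" unfolding y_def by (rule ip_cong) (auto simp: inv_apply[OF inv])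
    also have "\<dots> = s" unfolding s_def qf_def by (rule herm_ip[OF HE])
    finally show ?thesis .
  qed
  have s3: "s = qf m Q y + qf m R y" unfolding s_def qf_add_mat[symmetric] by (rule qf_cong_mat[OF EQR])
  have sreal: "Im s = 0" using psd_qf[OF Epsd] s_def by simp
  have s4: "ip m y (mv m Q x) = cnj s"
    unfolding s2[symmetric] by (metis herm_ip[OF HQ] ip_cnj)
  have "Re (qf m Q (\<lambda>p. x p - y p)) \<ge> 0" using psd_qf[OF Q] by blast
  moreover have "qf m Q (\<lambda>p. x p - y p) = qf m Q x - s - cnj s + qf m Q y"
    unfolding qf_def mv_diff_vec ip_diff_left ip_diff_right
    using s2 s4 unfolding qf_def by simp
  ultimately have "Re (qf m Q x) - 2 * Re s + Re (qf m Q y) \<ge> 0" by simp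
  moreover have "Re (qf m R y) \<ge> 0" using psd_qf[OF R] by blast
  ultimately have "Re (qf m Q x) - Re s \<ge> 0" using s3 by simp
  moreover have "Im (qf m Q x) = 0" using psd_qf[OF Q] by blast
  ultimately show "Im (qf m (\<lambda>i j. Q i j - mm m (mm m Q Y) Q i j) x) = 0 \<and>
      0 \<le> Re (qf m (\<lambda>i j. Q i j - mm m (mm m Q Y) Q i j) x)"
    unfolding qf_diff_mat s1 using sreal by simp
qed




lemma cs_quad: fixes a u v c :: complex
  assumes H: "\<And>l. Im (cnj l * l * a + cnj l * u + l * v + c) = 0 \<and> Re (cnj l * l * a + cnj l * u + l * v + c) \<ge> 0"
  and ra: "Re a \<ge> 0"
  shows "(cmod u)^2 \<le> Re a * Re c"
proof -
  have h0: "Im c = 0" "Re c \<ge> 0" using H[of 0] by auto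
  have h1: "Im (a + u + v + c) = 0" using H[of 1] by simp
  have h2: "Im (a - u - v + c) = 0" using H[of "-1"] by simp
  have h3: "Im (a - \<i> * u + \<i> * v + c) = 0" using H[of "\<i>"] by simp
  have ia: "Im a = 0" using h0 h1 h2 by simp
  have v: "v = cnj u" using h0 h1 h2 h3 ia by (simp add: complex_eq_iff)
  define A where "A = Re a"
  define C where "C = Re c"
  define N where "N = (cmod u)^2"
  have a: "a = of_real A" unfolding A_def using ia by (simp add: complex_eq_iff)
  have c: "c = of_real C" unfolding C_def using h0 by (simp add: complex_eq_iff)
  have uu: "cnj u * u = of_real N" "u * cnj u = of_real N"
    unfolding N_def complex_norm_square by (simp_all add: mult.commute)
  show ?thesis
  proof (cases "A > 0")
    case True
    define l where "l = - u / of_real A"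
    define x where "x = (of_real A :: complex)"
    have x0: "x \<noteq> 0" using True unfolding x_def by simp
    have cl: "cnj l = - cnj u / x" unfolding l_def x_def by simp
    have e1: "cnj l * l * a = cnj u * u / x" unfolding cl a x_def[symmetric] unfolding l_def x_def[symmetric]
      using x0 by (simp add: field_simps)
    have e2: "cnj l * u = - (cnj u * u) / x" unfolding cl by simp
    have e3: "l * v = - (u * cnj u) / x" unfolding l_def x_def[symmetric] v by simp
    have "cnj l * l * a + cnj l * u + l * v + c = of_real N / x - of_real N / x - of_real N / x + of_real C"
      unfolding e1 e2 e3 uu c by simp
    also have "\<dots> = of_real (C - N / A)" unfolding x_def by simp
    finally have "cnj l * l * a + cnj l * u + l * v + c = of_real (C - N / A)" .
    hence "C - N / A \<ge> 0" using H[of l] by simp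
    hence "N \<le> A * C" using True by (simp add: field_simps)
    thus ?thesis unfolding N_def A_def C_def .
  next
    case False
    hence A0: "A = 0" using ra A_def by simp
    have "N = 0"
    proof (rule ccontr)
      assume "N \<noteq> 0"
      hence Np: "N > 0" unfolding N_def by simp
      define t where "t = (C + 1) / (2 * N)"
      define l where "l = - of_real t * u"
      have "cnj l * l * a + cnj l * u + l * v + c = of_real (C - 2 * t * N)"
        unfolding l_def a c v A0 using uu by (simp add: algebra_simps)
      hence "C - 2 * t * N \<ge> 0" using H[of l] by simp
      moreover have "2 * t * N = C + 1" unfolding t_def using Np by simp
      ultimately show False by simp
    qed
    thus ?thesis unfolding N_def A_def[symmetric] C_def[symmetric] using A0 by simp
  qed
qed




lemma Phi_cs:
  assumes P: "psd k P" and Qa: "psd m Qa" and Qb: "psd m Qb" and Y: "psd m Y"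
    and Ca: "psd m (\<lambda>i j. Qa i j - mm m (mm m Qa Y) Qa i j)"
    and Cb: "psd m (\<lambda>i j. Qb i j - mm m (mm m Qb Y) Qb i j)"
  shows "cmod (Phi k m \<alpha> P (mm m (mm m Qa Y) Qb)) \<le> sqrt (Re (Phi k m \<alpha> P Qa)) * sqrt (Re (Phi k m \<alpha> P Qb))"
proof -
  have HA: "herm m Qa" using psd_herm[OF Qa] .
  have HB: "herm m Qb" using psd_herm[OF Qb] .
  define taa where "taa = Phi k m \<alpha> P (mm m (mm m Qa Y) Qa)"
  define tab where "tab = Phi k m \<alpha> P (mm m (mm m Qa Y) Qb)"
  define tba where "tba = Phi k m \<alpha> P (mm m (mm m Qb Y) Qa)"
  define tbb where "tbb = Phi k m \<alpha> P (mm m (mm m Qb Y) Qb)"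
  have quad: "Im (cnj l * l * taa + cnj l * tab + l * tba + tbb) = 0 \<and> Re (cnj l * l * taa + cnj l * tab + l * tba + tbb) \<ge> 0" for l
  proof -
    have "Phi k m \<alpha> P (\<lambda>i j. cnj l * l * mm m (mm m Qa Y) Qa i j + cnj l * mm m (mm m Qa Y) Qb i j
                     + l * mm m (mm m Qb Y) Qa i j + mm m (mm m Qb Y) Qb i j)
          = cnj l * l * taa + cnj l * tab + l * tba + tbb"
      unfolding taa_def tab_def tba_def tbb_def by (simp only: Phi_add_Z Phi_scale_Z)
    thus ?thesis using Phi_pos[OF P psd_Zl[OF HA HB Y, of l], of \<alpha>] by simp
  qed
  have taa0: "Re taa \<ge> 0" using Phi_pos[OF P psd_sandwich[OF HA Y]] taa_def by simp
  have tbb0: "Re tbb \<ge> 0" using Phi_pos[OF P psd_sandwich[OF HB Y]] tbb_def by simp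
  have cs: "(cmod tab)^2 \<le> Re taa * Re tbb" by (rule cs_quad[OF quad taa0])
  have la: "Re taa \<le> Re (Phi k m \<alpha> P Qa)"
    using Phi_pos[OF P Ca, of \<alpha>] unfolding Phi_diff_Z taa_def by simp
  have lb: "Re tbb \<le> Re (Phi k m \<alpha> P Qb)"
    using Phi_pos[OF P Cb, of \<alpha>] unfolding Phi_diff_Z tbb_def by simp
  have "(cmod tab)^2 \<le> Re (Phi k m \<alpha> P Qa) * Re (Phi k m \<alpha> P Qb)"
    using cs la lb taa0 tbb0 by (meson mult_mono order_trans)
  hence "sqrt ((cmod tab)^2) \<le> sqrt (Re (Phi k m \<alpha> P Qa) * Re (Phi k m \<alpha> P Qb))"
    using real_sqrt_le_mono by blast
  thus ?thesis unfolding tab_def by (simp add: real_sqrt_mult)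
qed




lemma S_ge: assumes "\<And>b. b \<in> {0,2::nat} \<Longrightarrow> x \<le> (\<Sum>i\<in>{1,2}. sqrt (q (b+i) (a+j)) * sqrt (q (b+i) (c+k)))"
  shows "x \<le> S q a c j k"
proof -
  define f where "f = (\<lambda>b. (\<Sum>i\<in>{1,2::nat}. sqrt (q (b+i) (a+j)) * sqrt (q (b+i) (c+k))))"
  have eq: "{(\<Sum>i\<in>{1,2}. sqrt (q (b+i) (a+j)) * sqrt (q (b+i) (c+k))) | b. b \<in> {0,2::nat}} = f ` {0,2}"
    unfolding f_def by (rule Setcompr_eq_image)
  show ?thesis unfolding S_def eq
  proof (rule Min.boundedI)
    fix y assume "y \<in> f ` {0,2}"
    then obtain b where b: "b \<in> {0,2}" "y = f b" by blast
    show "x \<le> y" unfolding b(2) f_def by (rule assms[OF b(1)])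
  qed auto
qed

lemma mm_add_left: assumes "\<And>l. l < n \<Longrightarrow> A r l = Aa r l + Ab r l"
  shows "mm n A B r j = mm n Aa B r j + mm n Ab B r j"
  unfolding mm_def using assms by (simp add: distrib_right sum.distrib)

lemma mm_add_right: assumes "\<And>l. l < n \<Longrightarrow> B l j = Ba l j + Bb l j"
  shows "mm n A B r j = mm n A Ba r j + mm n A Bb r j"
  unfolding mm_def using assms by (simp add: distrib_left sum.distrib)

lemma mm_inv_left: assumes "\<forall>i<m. \<forall>j<m. mm m E Y i j = (if i = j then 1 else 0)" "r < m"
  shows "mm m (mm m E Y) B r j = B r j"
proof -
  have "mm m (mm m E Y) B r j = (\<Sum>l<m. if l = r then B l j else 0)"
    unfolding mm_def[of m "mm m E Y"]
  proof (rule sum.cong[OF refl])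
    fix l assume "l \<in> {..<m}"
    hence "mm m E Y r l = (if r = l then 1 else 0)" using assms by blast
    thus "mm m E Y r l * B l j = (if l = r then B l j else 0)" by auto
  qed
  also have "\<dots> = B r j" using assms(2) by simp
  finally show ?thesis .
qed




lemma core:
  fixes P :: "nat \<Rightarrow> nat \<Rightarrow> nat \<Rightarrow> complex" and QQ :: "nat \<Rightarrow> nat \<Rightarrow> nat \<Rightarrow> complex"
  assumes Ppsd: "\<And>r. r \<in> {1..4} \<Longrightarrow> psd k (\<lambda>p p'. P p p' r)"
    and Psum: "\<And>p p'. p < k \<Longrightarrow> p' < k \<Longrightarrow> P p p' 1 + P p p' 2 = P p p' 3 + P p p' 4"
    and Qpsd: "\<And>j. j \<in> {1..4} \<Longrightarrow> psd m (QQ j)"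
    and QE1: "\<And>r r'. r < m \<Longrightarrow> r' < m \<Longrightarrow> E r r' = QQ 1 r r' + QQ 2 r r'"
    and QE2: "\<And>r r'. r < m \<Longrightarrow> r' < m \<Longrightarrow> E r r' = QQ 3 r r' + QQ 4 r r'"
    and inv: "\<forall>i<m. \<forall>j<m. mm m E Y i j = (if i = j then 1 else 0)"
    and w_def: "\<And>i j. w i j = Re (Phi k m \<alpha> (\<lambda>p p'. P p p' i) (QQ j))"
    and d: "d \<in> {0,2}" and a: "a \<in> {0,2}" and c: "c \<in> {0,2}"
  shows "(\<Sum>i\<in>{1,2}. \<Sum>j\<in>{1,2}. w (d+i) (d+j)) \<le> (\<Sum>j\<in>{1,2}. \<Sum>k\<in>{1,2}. S w a c j k)"
proof -
  define PP where "PP = (\<lambda>r p p'. P p p' r)"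
  define Pe where "Pe = (\<lambda>p p'. P p p' 1 + P p p' 2)"
  have Epsd: "psd m E" by (rule psd_cong[OF psd_add[OF Qpsd Qpsd] QE1]) auto
  have Ypsd: "psd m Y" by (rule psd_inv[OF Epsd inv])
  have QEx: "E r r' = QQ (x+1) r r' + QQ (x+2) r r'" if "x \<in> {0,2}" "r < m" "r' < m" for x r r'
  proof -
    have "(x+1 = 1 \<and> x+2 = 2) \<or> (x+1 = 3 \<and> x+2 = 4)" using that(1) by auto
    thus ?thesis using QE1[OF that(2,3)] QE2[OF that(2,3)] by (elim disjE conjE) metis+
  qed
  have Cx: "psd m (\<lambda>i j. QQ x i j - mm m (mm m (QQ x) Y) (QQ x) i j)" if x: "x \<in> {1..4}" for x
  proof -
    have "x = 1 \<or> x = 2 \<or> x = 3 \<or> x = 4" using x by auto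
    thus ?thesis
    proof (elim disjE)
      assume "x = 1" thus ?thesis using lemmaC[OF Qpsd Qpsd QE1 inv] by simp
    next
      assume "x = 2" thus ?thesis using lemmaC[OF Qpsd Qpsd _ inv, of 2 1] QE1 by (simp add: add.commute)
    next
      assume "x = 3" thus ?thesis using lemmaC[OF Qpsd Qpsd QE2 inv] by simp
    next
      assume "x = 4" thus ?thesis using lemmaC[OF Qpsd Qpsd _ inv, of 4 3] QE2 by (simp add: add.commute)
    qed
  qed
  have PeF: "Phi k m \<alpha> (PP (b+1)) Z + Phi k m \<alpha> (PP (b+2)) Z = Phi k m \<alpha> Pe Z" if "b \<in> {0,2}" for b Z
  proof -
    have "b = 0 \<or> b = 2" using that by auto
    thus ?thesis
    proof
      assume "b = 0"
      hence e: "b+1 = 1" "b+2 = 2" by simp_all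
      show ?thesis unfolding e PP_def Pe_def by (simp only: Phi_add_P)
    next
      assume b2: "b = 2"
      have "Phi k m \<alpha> (PP (b+1)) Z + Phi k m \<alpha> (PP (b+2)) Z = Phi k m \<alpha> (\<lambda>p p'. P p p' 3 + P p p' 4) Z"
        unfolding PP_def b2 by (simp add: Phi_add_P)
      also have "\<dots> = Phi k m \<alpha> Pe Z" unfolding Pe_def by (rule Phi_cong_P) (metis Psum)
      finally show ?thesis .
    qed
  qed
  define s where "s = (\<lambda>j' k'. mm m (mm m (QQ (a+j')) Y) (QQ (c+k')))"
  have rowb: "cmod (Phi k m \<alpha> Pe (s j' k')) \<le> (\<Sum>i\<in>{1,2}. sqrt (w (b+i) (a+j')) * sqrt (w (b+i) (c+k')))"
    if b: "b \<in> {0,2}" and j': "j' \<in> {1,2}" and k': "k' \<in> {1,2}" for b j' k'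
  proof -
    have aj: "a + j' \<in> {1..4}" using a j' by auto
    have ck: "c + k' \<in> {1..4}" using c k' by auto
    have one: "cmod (Phi k m \<alpha> (PP (b+i)) (s j' k')) \<le> sqrt (w (b+i) (a+j')) * sqrt (w (b+i) (c+k'))"
      if i: "i \<in> {1,2}" for i
    proof -
      have bi: "b + i \<in> {1..4}" using b i by auto
      show ?thesis unfolding w_def s_def PP_def
        by (rule Phi_cs[OF Ppsd[OF bi] Qpsd[OF aj] Qpsd[OF ck] Ypsd Cx[OF aj] Cx[OF ck]])
    qed
    have "cmod (Phi k m \<alpha> Pe (s j' k')) = cmod (Phi k m \<alpha> (PP (b+1)) (s j' k') + Phi k m \<alpha> (PP (b+2)) (s j' k'))"
      using PeF[OF b] by simp
    also have "\<dots> \<le> cmod (Phi k m \<alpha> (PP (b+1)) (s j' k')) + cmod (Phi k m \<alpha> (PP (b+2)) (s j' k'))"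
      by (rule norm_triangle_ineq)
    also have "\<dots> \<le> (\<Sum>i\<in>{1,2}. sqrt (w (b+i) (a+j')) * sqrt (w (b+i) (c+k')))"
      using one[of 1] one[of 2] by simp
    finally show ?thesis .
  qed
  have Sb: "cmod (Phi k m \<alpha> Pe (s j' k')) \<le> S w a c j' k'" if "j' \<in> {1,2}" "k' \<in> {1,2}" for j' k'
    by (rule S_ge) (rule rowb[OF _ that])
  have ssum: "s 1 1 r r' + s 1 2 r r' + s 2 1 r r' + s 2 2 r r' = E r r'" if r: "r < m" "r' < m" for r r'
  proof -
    have rowE: "mm m E Y r l = mm m (QQ (a+1)) Y r l + mm m (QQ (a+2)) Y r l" for l
      by (rule mm_add_left) (use QEx[OF a r(1)] in auto)
    have "mm m (mm m E Y) E r r' = mm m (mm m (QQ (a+1)) Y) E r r' + mm m (mm m (QQ (a+2)) Y) E r r'"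
      by (rule mm_add_left) (rule rowE)
    also have "\<dots> = s 1 1 r r' + s 1 2 r r' + s 2 1 r r' + s 2 2 r r'"
      unfolding s_def
      using mm_add_right[where n=m and B=E and j=r' and Ba="QQ (c+1)" and Bb="QQ (c+2)" and A="mm m (QQ (a+1)) Y" and r=r]
            mm_add_right[where n=m and B=E and j=r' and Ba="QQ (c+1)" and Bb="QQ (c+2)" and A="mm m (QQ (a+2)) Y" and r=r]
            QEx[OF c _ r(2)] by simp
    finally show ?thesis using mm_inv_left[OF inv r(1)] by simp
  qed
  have "(\<Sum>i\<in>{1,2}. \<Sum>j\<in>{1,2}. w (d+i) (d+j)) = Re (Phi k m \<alpha> Pe E)"
  proof -
    have r1: "Phi k m \<alpha> X (QQ (d+1)) + Phi k m \<alpha> X (QQ (d+2)) = Phi k m \<alpha> X E" for X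
      unfolding Phi_add_Z[symmetric] by (rule Phi_cong_Z) (simp add: QEx[OF d])
    have "(\<Sum>i\<in>{1,2}. \<Sum>j\<in>{1,2}. w (d+i) (d+j))
        = Re (Phi k m \<alpha> (PP (d+1)) E + Phi k m \<alpha> (PP (d+2)) E)"
    proof -
      have r1': "Re (Phi k m \<alpha> X (QQ (d+1))) + Re (Phi k m \<alpha> X (QQ (d+2))) = Re (Phi k m \<alpha> X E)" for X
        using arg_cong[OF r1[of X], of Re] by simp
      show ?thesis unfolding w_def using r1'[of "PP (d+1)"] r1'[of "PP (d+2)"] unfolding PP_def by simp
    qed
    also have "\<dots> = Re (Phi k m \<alpha> Pe E)" using PeF[OF d] by simp
    finally show ?thesis .
  qed
  also have "Phi k m \<alpha> Pe E = Phi k m \<alpha> Pe (s 1 1) + Phi k m \<alpha> Pe (s 1 2) + Phi k m \<alpha> Pe (s 2 1) + Phi k m \<alpha> Pe (s 2 2)"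
    unfolding Phi_add_Z[symmetric] by (rule Phi_cong_Z) (metis ssum)
  also have "Re \<dots> \<le> cmod \<dots>" by (rule complex_Re_le_cmod)
  also have "\<dots> \<le> cmod (Phi k m \<alpha> Pe (s 1 1)) + cmod (Phi k m \<alpha> Pe (s 1 2)) + cmod (Phi k m \<alpha> Pe (s 2 1)) + cmod (Phi k m \<alpha> Pe (s 2 2))"
    using norm_triangle_ineq[of "Phi k m \<alpha> Pe (s 1 1) + Phi k m \<alpha> Pe (s 1 2) + Phi k m \<alpha> Pe (s 2 1)" "Phi k m \<alpha> Pe (s 2 2)"]
      norm_triangle_ineq[of "Phi k m \<alpha> Pe (s 1 1) + Phi k m \<alpha> Pe (s 1 2)" "Phi k m \<alpha> Pe (s 2 1)"]
      norm_triangle_ineq[of "Phi k m \<alpha> Pe (s 1 1)" "Phi k m \<alpha> Pe (s 1 2)"] by linarith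
  also have "\<dots> \<le> (\<Sum>j\<in>{1,2}. \<Sum>k\<in>{1,2}. S w a c j k)"
    using Sb[of 1 1] Sb[of 1 2] Sb[of 2 1] Sb[of 2 2] by simp
  finally show ?thesis .
qed




lemma sqrt_pert: fixes x x' y y' h B :: real
  assumes "0 \<le> x" "x \<le> x'" "x' \<le> x + h" "0 \<le> y" "y \<le> y'" "y' \<le> y + h"
    "0 < h" "h \<le> 1" "sqrt x \<le> B" "sqrt y \<le> B"
  shows "sqrt x' * sqrt y' \<le> sqrt x * sqrt y + sqrt h * (2 * B + 1)"
proof -
  have sx: "sqrt x' \<le> sqrt x + sqrt h"
  proof -
    have "sqrt x' \<le> sqrt (x + h)" using assms by simp
    also have "\<dots> \<le> sqrt x + sqrt h" using assms by (simp add: sqrt_add_le_add_sqrt)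
    finally show ?thesis .
  qed
  have sy: "sqrt y' \<le> sqrt y + sqrt h"
  proof -
    have "sqrt y' \<le> sqrt (y + h)" using assms by simp
    also have "\<dots> \<le> sqrt y + sqrt h" using assms by (simp add: sqrt_add_le_add_sqrt)
    finally show ?thesis .
  qed
  have p0: "0 \<le> sqrt x'" "0 \<le> sqrt y'" using assms by auto
  have "sqrt x' * sqrt y' \<le> (sqrt x + sqrt h) * (sqrt y + sqrt h)"
    using sx sy p0 by (meson mult_mono order_trans real_sqrt_ge_zero assms add_nonneg_nonneg less_imp_le)
  also have "\<dots> = sqrt x * sqrt y + sqrt h * (sqrt x + sqrt y) + sqrt h * sqrt h"
    by (simp add: algebra_simps)
  also have "sqrt h * sqrt h \<le> sqrt h * 1"
  proof -
    have "sqrt h \<le> 1" using assms by simp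
    thus ?thesis using assms by (intro mult_left_mono) auto
  qed
  hence "sqrt x * sqrt y + sqrt h * (sqrt x + sqrt y) + sqrt h * sqrt h \<le> sqrt x * sqrt y + sqrt h * (2 * B + 1)"
  proof -
    have "sqrt h * (sqrt x + sqrt y) \<le> sqrt h * (2 * B)" using assms by (intro mult_left_mono) auto
    thus ?thesis using \<open>sqrt h * sqrt h \<le> sqrt h * 1\<close> by (simp add: algebra_simps)
  qed
  finally show ?thesis .
qed

lemma S_pert:
  fixes q q' :: "nat \<Rightarrow> nat \<Rightarrow> real"
  assumes q0: "\<And>i j. i \<in> {1..4} \<Longrightarrow> j \<in> {1..4} \<Longrightarrow> q i j \<ge> 0"
    and qq: "\<And>i j. i \<in> {1..4} \<Longrightarrow> j \<in> {1..4} \<Longrightarrow> q i j \<le> q' i j \<and> q' i j \<le> q i j + h"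
    and B: "\<And>i j. i \<in> {1..4} \<Longrightarrow> j \<in> {1..4} \<Longrightarrow> sqrt (q i j) \<le> B"
    and h: "0 < h" "h \<le> 1"
    and a: "a \<in> {0,2}" and c: "c \<in> {0,2}" and j: "j \<in> {1,2}" and k: "k \<in> {1,2}"
  shows "S q' a c j k \<le> S q a c j k + 2 * (sqrt h * (2 * B + 1))"
proof -
  define f where "f = (\<lambda>q b. (\<Sum>i\<in>{1,2::nat}. sqrt (q (b+i) (a+j)) * sqrt (q (b+i) (c+k))))"
  have Seq: "S q a c j k = Min (f q ` {0,2})" for q
    unfolding S_def f_def by (simp only: Setcompr_eq_image)
  obtain b0 where b0: "b0 \<in> {0,2}" "S q a c j k = f q b0"
    unfolding Seq using Min_in[of "f q ` {0,2}"] by auto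
  have "S q' a c j k \<le> f q' b0" unfolding Seq using b0 by (intro Min_le) auto
  also have "f q' b0 \<le> f q b0 + 2 * (sqrt h * (2 * B + 1))"
  proof -
    have t: "sqrt (q' (b0+i) (a+j)) * sqrt (q' (b0+i) (c+k)) \<le> sqrt (q (b0+i) (a+j)) * sqrt (q (b0+i) (c+k)) + sqrt h * (2 * B + 1)"
      if i: "i \<in> {1,2}" for i
    proof -
      have m: "b0 + i \<in> {1..4}" "a + j \<in> {1..4}" "c + k \<in> {1..4}" using b0(1) i a c j k by auto
      show ?thesis
        by (rule sqrt_pert) (use q0[OF m(1,2)] q0[OF m(1,3)] qq[OF m(1,2)] qq[OF m(1,3)] B[OF m(1,2)] B[OF m(1,3)] h in auto)
    qed
    show ?thesis unfolding f_def using t[of 1] t[of 2] by simp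
  qed
  finally show ?thesis using b0(2) by simp
qed

lemma approx:
  fixes q :: "nat \<Rightarrow> nat \<Rightarrow> real"
  assumes q0: "\<And>i j. i \<in> {1..4} \<Longrightarrow> j \<in> {1..4} \<Longrightarrow> q i j \<ge> 0"
    and H: "\<And>h. h > 0 \<Longrightarrow> \<exists>q'. (\<forall>i\<in>{1..4}. \<forall>j\<in>{1..4}. q i j \<le> q' i j \<and> q' i j \<le> q i j + h) \<and>
        (\<Sum>i\<in>{1,2}. \<Sum>j\<in>{1,2}. q' (d+i) (d+j)) \<le> (\<Sum>j\<in>{1,2}. \<Sum>k\<in>{1,2}. S q' a c j k)"
    and d: "d \<in> {0,2}" and a: "a \<in> {0,2}" and c: "c \<in> {0,2}"
  shows "(\<Sum>i\<in>{1,2}. \<Sum>j\<in>{1,2}. q (d+i) (d+j)) \<le> (\<Sum>j\<in>{1,2}. \<Sum>k\<in>{1,2}. S q a c j k)"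
proof -
  define B where "B = (\<Sum>i\<in>{1..4::nat}. \<Sum>j\<in>{1..4::nat}. sqrt (q i j))"
  have Bb: "sqrt (q i j) \<le> B" if "i \<in> {1..4}" "j \<in> {1..4}" for i j
  proof -
    have "sqrt (q i j) \<le> (\<Sum>j\<in>{1..4::nat}. sqrt (q i j))"
      by (rule member_le_sum) (use that q0 in auto)
    also have "\<dots> \<le> B" unfolding B_def
      by (rule member_le_sum[where f="\<lambda>i. \<Sum>j\<in>{1..4::nat}. sqrt (q i j)"]) (use that q0 in \<open>auto intro: sum_nonneg\<close>)
    finally show ?thesis .
  qed
  have B0: "B \<ge> 0" unfolding B_def by (intro sum_nonneg) (simp add: q0)
  define K where "K = 8 * (2 * B + 1)"
  have K0: "K > 0" unfolding K_def using B0 by simp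
  define L where "L = (\<Sum>i\<in>{1,2}. \<Sum>j\<in>{1,2}. q (d+i) (d+j))"
  define R where "R = (\<Sum>j\<in>{1,2}. \<Sum>k\<in>{1,2}. S q a c j k)"
  have step: "L \<le> R + K * sqrt h" if h: "0 < h" "h \<le> 1" for h
  proof -
    obtain q' where q': "\<forall>i\<in>{1..4}. \<forall>j\<in>{1..4}. q i j \<le> q' i j \<and> q' i j \<le> q i j + h"
      "(\<Sum>i\<in>{1,2}. \<Sum>j\<in>{1,2}. q' (d+i) (d+j)) \<le> (\<Sum>j\<in>{1,2}. \<Sum>k\<in>{1,2}. S q' a c j k)"
      using H[OF h(1)] by blast
    have Lm: "q (d+i) (d+j) \<le> q' (d+i) (d+j)" if "i \<in> {1,2}" "j \<in> {1,2}" for i j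
      using q'(1) that d by auto
    have "L \<le> (\<Sum>i\<in>{1,2}. \<Sum>j\<in>{1,2}. q' (d+i) (d+j))"
      unfolding L_def by (intro sum_mono) (rule Lm)
    also have "\<dots> \<le> (\<Sum>j\<in>{1,2}. \<Sum>k\<in>{1,2}. S q' a c j k)" by (rule q'(2))
    also have "\<dots> \<le> (\<Sum>j\<in>{1,2::nat}. \<Sum>k\<in>{1,2::nat}. S q a c j k + 2 * (sqrt h * (2 * B + 1)))"
      by (intro sum_mono S_pert[OF q0 _ Bb h a c]) (use q'(1) in auto)
    also have "\<dots> = R + K * sqrt h" unfolding R_def K_def by (simp add: sum.distrib algebra_simps)
    finally show ?thesis .
  qed
  show ?thesis unfolding L_def[symmetric] R_def[symmetric]
  proof (rule ccontr)
    assume "\<not> L \<le> R"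
    hence dl: "L - R > 0" by simp
    define h where "h = min 1 (((L - R) / (2 * K))^2)"
    have h0: "0 < h" "h \<le> 1" unfolding h_def using dl K0 by auto
    have "h \<le> ((L - R) / (2 * K))^2" unfolding h_def by simp
    hence "sqrt h \<le> sqrt (((L - R) / (2 * K))^2)" by (rule real_sqrt_le_mono)
    also have "\<dots> = (L - R) / (2 * K)" using dl K0 by simp
    finally have "K * sqrt h \<le> K * ((L - R) / (2 * K))" using K0 by (intro mult_left_mono) auto
    also have "\<dots> = (L - R) / 2" using K0 by simp
    finally have "K * sqrt h \<le> (L - R) / 2" .
    with step[OF h0] dl show False by simp
  qed
qed




lemma qf_Id: "qf m (\<lambda>r r'. if r = r' then 1 else 0) x = ip m x x"
  unfolding qf_def
proof (rule ip_cong)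
  fix p assume p: "p < m"
  have "mv m (\<lambda>r r'. if r = r' then 1 else 0) x p = (\<Sum>l<m. if l = p then x l else 0)"
    unfolding mv_def by (rule sum.cong) auto
  thus "mv m (\<lambda>r r'. if r = r' then 1 else 0) x p = x p" using p by simp
qed simp

lemma psd_sId: assumes "t \<ge> 0" shows "psd m (\<lambda>r r'. of_real t * (if r = r' then 1 else 0))"
  unfolding psd_iff qf_scale_mat qf_Id ip_self using assms by (simp add: sum_nonneg)

theorem theorem6p10:
  fixes q :: "nat \<Rightarrow> nat \<Rightarrow> real" and d :: nat
  assumes "max_pos (\<lambda>i j. complex_of_real (q i j))"
    and "d \<in> {0, 2}"
  shows "(\<Sum>i\<in>{1,2}. \<Sum>j\<in>{1,2}. q (d+i) (d+j))
     \<le> Min {(\<Sum>j\<in>{1,2}. \<Sum>k\<in>{1,2}. S q a c j k) | a c. a \<in> {0,2::nat} \<and> c \<in> {0,2::nat}}"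
proof -
  have rep: "\<exists>k m P Q \<alpha>. MkV_pos k P \<and> MkV_pos m Q \<and>
     (\<forall>i\<in>{1..4}. \<forall>j\<in>{1..4}. complex_of_real (q i j) + complex_of_real \<epsilon> =
        Phi k m \<alpha> (\<lambda>p p'. P p p' i) (\<lambda>r r'. Q r r' j))" if e: "\<epsilon> > 0" for \<epsilon>
  proof -
    have "(\<lambda>i j. complex_of_real (q i j) + complex_of_real \<epsilon>) \<in> max_D"
      using assms(1) e unfolding max_pos_def by blast
    thus ?thesis unfolding max_D_def Phi_def by simp
  qed
  have q0: "q i j \<ge> 0" if ij: "i \<in> {1..4}" "j \<in> {1..4}" for i j
  proof (rule ccontr)
    assume "\<not> q i j \<ge> 0"
    hence neg: "q i j < 0" by simp
    define \<epsilon> where "\<epsilon> = - q i j / 2"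
    have e: "\<epsilon> > 0" unfolding \<epsilon>_def using neg by simp
    obtain k m P Q \<alpha> where kP: "MkV_pos k P" and mQ: "MkV_pos m Q" and
      eq: "\<forall>i\<in>{1..4}. \<forall>j\<in>{1..4}. complex_of_real (q i j) + complex_of_real \<epsilon> =
        Phi k m \<alpha> (\<lambda>p p'. P p p' i) (\<lambda>r r'. Q r r' j)"
      using rep[OF e] by blast
    have "Re (Phi k m \<alpha> (\<lambda>p p'. P p p' i) (\<lambda>r r'. Q r r' j)) \<ge> 0"
      using Phi_pos kP mQ ij unfolding MkV_pos_def by blast
    hence "q i j + \<epsilon> \<ge> 0" using eq ij by (metis Re_complex_of_real plus_complex.sel(1))
    thus False unfolding \<epsilon>_def using neg by simp
  qed
  have main: "(\<Sum>i\<in>{1,2}. \<Sum>j\<in>{1,2}. q (d+i) (d+j)) \<le> (\<Sum>j\<in>{1,2}. \<Sum>k\<in>{1,2}. S q a c j k)"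
    if a: "a \<in> {0,2}" and c: "c \<in> {0,2}" for a c
  proof (rule approx[OF q0 _ assms(2) a c])
    fix h :: real assume h: "h > 0"
    define \<epsilon> where "\<epsilon> = h / 2"
    have e: "\<epsilon> > 0" unfolding \<epsilon>_def using h by simp
    obtain k m P Q \<alpha> where kP: "MkV_pos k P" and mQ: "MkV_pos m Q" and
      eq: "\<forall>i\<in>{1..4}. \<forall>j\<in>{1..4}. complex_of_real (q i j) + complex_of_real \<epsilon> =
        Phi k m \<alpha> (\<lambda>p p'. P p p' i) (\<lambda>r r'. Q r r' j)"
      using rep[OF e] by blast
    define I where "I = (\<lambda>r r'::nat. if r = r' then (1::complex) else 0)"
    define Cm where "Cm = (\<Sum>i\<in>{1..4::nat}. Re (Phi k m \<alpha> (\<lambda>p p'. P p p' i) I))"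
    have Ppsd: "\<And>r. r \<in> {1..4} \<Longrightarrow> psd k (\<lambda>p p'. P p p' r)" using kP unfolding MkV_pos_def by blast
    have Qpsd0: "\<And>r. r \<in> {1..4} \<Longrightarrow> psd m (\<lambda>x y. Q x y r)" using mQ unfolding MkV_pos_def by blast
    have Ipsd: "psd m I" using psd_sId[of 1 m] unfolding I_def by simp
    have ci0: "Re (Phi k m \<alpha> (\<lambda>p p'. P p p' i) I) \<ge> 0" if "i \<in> {1..4}" for i
      using Phi_pos[OF Ppsd[OF that] Ipsd] by blast
    have ciC: "Re (Phi k m \<alpha> (\<lambda>p p'. P p p' i) I) \<le> Cm" if "i \<in> {1..4}" for i
      unfolding Cm_def by (rule member_le_sum[where f="\<lambda>i. Re (Phi k m \<alpha> (\<lambda>p p'. P p p' i) I)"]) (use that ci0 in auto)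
    have Cm0: "Cm \<ge> 0" unfolding Cm_def by (intro sum_nonneg ci0) 
    define \<delta> where "\<delta> = h / (Cm + 1)"
    have d0: "\<delta> > 0" unfolding \<delta>_def using h Cm0 by simp
    have dC: "\<delta> * Cm \<le> h" unfolding \<delta>_def using h Cm0 by (simp add: field_simps)
    define QQ where "QQ = (\<lambda>j r r'. Q r r' j + complex_of_real (\<delta>/2) * I r r')"
    define E where "E = (\<lambda>r r'. QQ 1 r r' + QQ 2 r r')"
    have Qpsd: "\<And>j. j \<in> {1..4} \<Longrightarrow> psd m (QQ j)"
      unfolding QQ_def I_def by (rule psd_add[OF Qpsd0 psd_sId]) (use d0 in auto)
    have QE1: "\<And>r r'. r < m \<Longrightarrow> r' < m \<Longrightarrow> E r r' = QQ 1 r r' + QQ 2 r r'" unfolding E_def by simp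
    have QE2: "E r r' = QQ 3 r r' + QQ 4 r r'" if "r < m" "r' < m" for r r'
    proof -
      have "inV (Q r r')" using mQ that unfolding MkV_pos_def by blast
      hence "Q r r' 1 + Q r r' 2 = Q r r' 3 + Q r r' 4" unfolding inV_def .
      thus ?thesis unfolding E_def QQ_def by (simp add: algebra_simps)
    qed
    have injE: "\<forall>p<m. x p = 0" if z: "\<forall>p<m. (\<Sum>l<m. E p l * x l) = 0" for x
    proof -
      have "qf m E x = ip m x (\<lambda>_. 0)" unfolding qf_def by (rule ip_cong) (use z in \<open>auto simp: mv_def\<close>)
      hence qz: "qf m E x = 0" unfolding ip_def by simp
      have qQ: "qf m (QQ j) x = qf m (\<lambda>x y. Q x y j) x + complex_of_real (\<delta>/2) * ip m x x" for j
        unfolding QQ_def I_def qf_add_mat qf_scale_mat qf_Id ..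
      define SS where "SS = (\<Sum>p<m. (cmod (x p))^2)"
      have ipS: "ip m x x = of_real SS" unfolding SS_def ip_self ..
      have "qf m E x = qf m (QQ 1) x + qf m (QQ 2) x" unfolding E_def qf_add_mat ..
      hence "0 = Re (qf m (QQ 1) x + qf m (QQ 2) x)" using qz by simp
      also have "\<dots> = Re (qf m (\<lambda>x y. Q x y 1) x) + Re (qf m (\<lambda>x y. Q x y 2) x) + \<delta> * SS"
        unfolding qQ ipS by (simp add: algebra_simps)
      finally have "0 = Re (qf m (\<lambda>x y. Q x y 1) x) + Re (qf m (\<lambda>x y. Q x y 2) x) + \<delta> * (\<Sum>p<m. (cmod (x p))^2)"
        unfolding SS_def .
      moreover have "Re (qf m (\<lambda>x y. Q x y 1) x) \<ge> 0" "Re (qf m (\<lambda>x y. Q x y 2) x) \<ge> 0"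
        using psd_qf[OF Qpsd0] by auto
      moreover have "\<delta> * (\<Sum>p<m. (cmod (x p))^2) \<ge> 0" using d0 by (simp add: sum_nonneg)
      ultimately have "\<delta> * (\<Sum>p<m. (cmod (x p))^2) = 0" by linarith
      hence "(\<Sum>p<m. (cmod (x p))^2) = 0" using d0 by simp
      hence "\<forall>p\<in>{..<m}. (cmod (x p))^2 = 0" by (subst (asm) sum_nonneg_eq_0_iff) auto
      thus ?thesis by simp
    qed
    obtain Y where inv: "\<forall>i<m. \<forall>j<m. (\<Sum>l<m. E i l * Y l j) = (if i = j then 1 else 0)"
      using right_inverse_exists[of m E] injE by blast
    have inv': "\<forall>i<m. \<forall>j<m. mm m E Y i j = (if i = j then 1 else 0)" using inv unfolding mm_def by simp
    have Psum: "\<And>p p'. p < k \<Longrightarrow> p' < k \<Longrightarrow> P p p' 1 + P p p' 2 = P p p' 3 + P p p' 4"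
      using kP unfolding MkV_pos_def inV_def by blast
    define q' where "q' = (\<lambda>i j. Re (Phi k m \<alpha> (\<lambda>p p'. P p p' i) (QQ j)))"
    have q'eq: "q' i j = q i j + \<epsilon> + \<delta>/2 * Re (Phi k m \<alpha> (\<lambda>p p'. P p p' i) I)"
      if ij: "i \<in> {1..4}" "j \<in> {1..4}" for i j
    proof -
      have "Phi k m \<alpha> (\<lambda>p p'. P p p' i) (QQ j) = Phi k m \<alpha> (\<lambda>p p'. P p p' i) (\<lambda>r r'. Q r r' j)
          + complex_of_real (\<delta>/2) * Phi k m \<alpha> (\<lambda>p p'. P p p' i) I"
        unfolding QQ_def Phi_add_Z Phi_scale_Z ..
      also have "\<dots> = complex_of_real (q i j) + complex_of_real \<epsilon> + complex_of_real (\<delta>/2) * Phi k m \<alpha> (\<lambda>p p'. P p p' i) I"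
        using eq ij by simp
      finally show ?thesis unfolding q'_def by simp
    qed
    show "\<exists>q'. (\<forall>i\<in>{1..4}. \<forall>j\<in>{1..4}. q i j \<le> q' i j \<and> q' i j \<le> q i j + h) \<and>
        (\<Sum>i\<in>{1,2}. \<Sum>j\<in>{1,2}. q' (d+i) (d+j)) \<le> (\<Sum>j\<in>{1,2}. \<Sum>k\<in>{1,2}. S q' a c j k)"
    proof (intro exI[of _ q'] conjI ballI)
      fix i j :: nat assume ij: "i \<in> {1..4}" "j \<in> {1..4}"
      have c1: "0 \<le> \<delta>/2 * Re (Phi k m \<alpha> (\<lambda>p p'. P p p' i) I)" using ci0[OF ij(1)] d0 by simp
      have "\<delta>/2 * Re (Phi k m \<alpha> (\<lambda>p p'. P p p' i) I) \<le> \<delta>/2 * Cm"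
        using ciC[OF ij(1)] d0 by (intro mult_left_mono) auto
      hence c2: "\<delta>/2 * Re (Phi k m \<alpha> (\<lambda>p p'. P p p' i) I) \<le> h/2" using dC by simp
      show "q i j \<le> q' i j" using q'eq[OF ij] c1 e by simp
      show "q' i j \<le> q i j + h" using q'eq[OF ij] c2 unfolding \<epsilon>_def by simp
    next
      show "(\<Sum>i\<in>{1,2}. \<Sum>j\<in>{1,2}. q' (d+i) (d+j)) \<le> (\<Sum>j\<in>{1,2}. \<Sum>k\<in>{1,2}. S q' a c j k)"
        by (rule core[where \<alpha>=\<alpha>, OF Ppsd Psum Qpsd QE1 QE2 inv' _ assms(2) a c]) (simp_all add: q'_def)
    qed
  qed
  show ?thesis
  proof (rule Min.boundedI)
    show "finite {(\<Sum>j\<in>{1,2}. \<Sum>k\<in>{1,2}. S q a c j k) | a c. a \<in> {0,2::nat} \<and> c \<in> {0,2::nat}}"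
      by (rule finite_image_set2) auto
    show "{(\<Sum>j\<in>{1,2}. \<Sum>k\<in>{1,2}. S q a c j k) | a c. a \<in> {0,2::nat} \<and> c \<in> {0,2::nat}} \<noteq> {}"
      by blast
    fix y assume "y \<in> {(\<Sum>j\<in>{1,2}. \<Sum>k\<in>{1,2}. S q a c j k) | a c. a \<in> {0,2::nat} \<and> c \<in> {0,2::nat}}"
    then obtain a c where ac: "a \<in> {0,2}" "c \<in> {0,2}" "y = (\<Sum>j\<in>{1,2}. \<Sum>k\<in>{1,2}. S q a c j k)" by blast
    show "(\<Sum>i\<in>{1,2}. \<Sum>j\<in>{1,2}. q (d+i) (d+j)) \<le> y" unfolding ac(3) by (rule main[OF ac(1,2)])
  qed
qed


end
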